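(* Let $\varphi(x)$, $x\in\mathbb{R}^n$, be given in conjunctive normal form $$\varphi(x)=\bigwedge_{i=1}^{d}\Big(\bigvee_{j=1}^{e_i} t_{ij}(x)=0\;\vee\;\bigvee_{k=1}^{f_i} u_{ik}(x)>0\Big),$$ with $t_{ij},u_{ik}\in\mathbb{R}[x_1,\dots,x_n]$, $d\ge1$ conjuncts, and at most $f$ strict order inequalities per conjunct. Then there is a polynomial $q(r,s,x)\in\mathbb{R}[r,s,x]$ of degree at most $2d-1$ in $r$ and at most $2f+1$ in $s$ such that for all $x\in\mathbb{R}^n$, $$\varphi(x)\iff(\forall r\in\mathbb{R})(\exists s\in\mathbb{R})\;q(r,s,x)=0.$$ Explicitly, one may take $$q=\Big[1-s\prod_{i=1}^d(r-i)\Big]\Big[\sum_{i=1}^d\prod_{h\neq i}(r-h)\prod_{j=1}^{e_i}t_{ij}(x)\prod_{k=1}^{f_i}\big(1-s^2u_{ik}(x)\big)\Big],$$ with $h$ ranging over $\{1,\dots,d\}\setminus\{i\}$.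
   Context: Empty products are $1$. *)

theory Defs
  imports "HOL-Analysis.Analysis"
begin

text \<open>Polynomial functions on R^n (real polynomials in the coordinates x$i).
Over the infinite field R, polynomials and polynomial functions correspond bijectively.\<close>
inductive polyfun :: "(real^'n \<Rightarrow> real) \<Rightarrow> bool" where
  const: "polyfun (\<lambda>x. c)"
| var: "polyfun (\<lambda>x. x $ i)"
| add: "polyfun p \<Longrightarrow> polyfun q \<Longrightarrow> polyfun (\<lambda>x. p x + q x)"
| mult: "polyfun p \<Longrightarrow> polyfun q \<Longrightarrow> polyfun (\<lambda>x. p x * q x)"

definition cnf_phi ::
  "nat \<Rightarrow> (nat \<Rightarrow> nat) \<Rightarrow> (nat \<Rightarrow> nat) \<Rightarrow> (nat \<Rightarrow> nat \<Rightarrow> real^'n \<Rightarrow> real)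
    \<Rightarrow> (nat \<Rightarrow> nat \<Rightarrow> real^'n \<Rightarrow> real) \<Rightarrow> real^'n \<Rightarrow> bool" where
  "cnf_phi d e fi t u x \<longleftrightarrow>
     (\<forall>i\<in>{1..d}. (\<exists>j\<in>{1..e i}. t i j x = 0) \<or> (\<exists>k\<in>{1..fi i}. u i k x > 0))"

definition q_explicit ::
  "nat \<Rightarrow> (nat \<Rightarrow> nat) \<Rightarrow> (nat \<Rightarrow> nat) \<Rightarrow> (nat \<Rightarrow> nat \<Rightarrow> real^'n \<Rightarrow> real)
    \<Rightarrow> (nat \<Rightarrow> nat \<Rightarrow> real^'n \<Rightarrow> real) \<Rightarrow> real \<Rightarrow> real \<Rightarrow> real^'n \<Rightarrow> real" where
  "q_explicit d e fi t u r s x =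
     (1 - s * (\<Prod>i=1..d. r - real i)) *
     (\<Sum>i=1..d. (\<Prod>h\<in>{1..d} - {i}. r - real h) * (\<Prod>j=1..e i. t i j x)
                 * (\<Prod>k=1..fi i. 1 - s^2 * u i k x))"

end

theory Submission
  imports Defs
begin

lemma pf_const: "polyfun (\<lambda>x. c)" by (rule polyfun.const)
lemma pf_add: "polyfun p \<Longrightarrow> polyfun q \<Longrightarrow> polyfun (\<lambda>x. p x + q x)" by (rule polyfun.add)
lemma pf_mult: "polyfun p \<Longrightarrow> polyfun q \<Longrightarrow> polyfun (\<lambda>x. p x * q x)" by (rule polyfun.mult)

lemma pf_prod: "finite J \<Longrightarrow> (\<And>j. j \<in> J \<Longrightarrow> polyfun (t j)) \<Longrightarrow> polyfun (\<lambda>x. \<Prod>j\<in>J. t j x)"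
proof (induction J rule: finite_induct)
  case empty then show ?case by (simp add: pf_const)
next
  case (insert a J)
  then show ?case using pf_mult[of "t a" "\<lambda>x. \<Prod>j\<in>J. t j x"] by simp
qed

definition bipoly :: "nat \<Rightarrow> nat \<Rightarrow> (real \<Rightarrow> real \<Rightarrow> real^'n \<Rightarrow> real) \<Rightarrow> bool" where
  "bipoly m n F \<longleftrightarrow> (\<exists>c. (\<forall>a b. polyfun (c a b)) \<and>
      (\<forall>r s x. (\<Sum>a\<le>m. \<Sum>b\<le>n. c a b x * r ^ a * s ^ b) = F r s x))"

lemma bp_const: "polyfun g \<Longrightarrow> bipoly 0 0 (\<lambda>r s x. g x)"
  unfolding bipoly_def
  by (rule exI[of _ "\<lambda>a b. g"]) simp

lemma bp_zero: "bipoly m n (\<lambda>r s x. 0)"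
  unfolding bipoly_def
  by (rule exI[of _ "\<lambda>a b x. 0"]) (simp add: pf_const)

lemma bp_add: "bipoly m n F \<Longrightarrow> bipoly m n G \<Longrightarrow> bipoly m n (\<lambda>r s x. F r s x + G r s x)"
  unfolding bipoly_def
proof (elim exE conjE)
  fix c c'
  assume "\<forall>a b. polyfun (c a b)" "\<forall>r s x. (\<Sum>a\<le>m. \<Sum>b\<le>n. c a b x * r ^ a * s ^ b) = F r s x"
    "\<forall>a b. polyfun (c' a b)" "\<forall>r s x. (\<Sum>a\<le>m. \<Sum>b\<le>n. c' a b x * r ^ a * s ^ b) = G r s x"
  then show "\<exists>c. (\<forall>a b. polyfun (c a b)) \<and>
      (\<forall>r s x. (\<Sum>a\<le>m. \<Sum>b\<le>n. c a b x * r ^ a * s ^ b) = F r s x + G r s x)"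
    by (intro exI[of _ "\<lambda>a b x. c a b x + c' a b x"])
       (auto simp: pf_add distrib_right sum.distrib)
qed

lemma bp_scal: "polyfun g \<Longrightarrow> bipoly m n F \<Longrightarrow> bipoly m n (\<lambda>r s x. g x * F r s x)"
  unfolding bipoly_def
proof (elim exE conjE)
  fix c
  assume "polyfun g" "\<forall>a b. polyfun (c a b)" and F: "\<forall>r s x. (\<Sum>a\<le>m. \<Sum>b\<le>n. c a b x * r ^ a * s ^ b) = F r s x"
  then show "\<exists>c. (\<forall>a b. polyfun (c a b)) \<and>
      (\<forall>r s x. (\<Sum>a\<le>m. \<Sum>b\<le>n. c a b x * r ^ a * s ^ b) = g x * F r s x)"
    by (intro exI[of _ "\<lambda>a b x. g x * c a b x"])
       (auto simp: pf_mult sum_distrib_left mult.assoc F[rule_format, symmetric])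
qed

lemma bp_r: "bipoly m n F \<Longrightarrow> bipoly (Suc m) n (\<lambda>r s x. r * F r s x)"
  unfolding bipoly_def
proof (elim exE conjE)
  fix c
  assume c: "\<forall>a b. polyfun (c a b)" and F: "\<forall>r s x. (\<Sum>a\<le>m. \<Sum>b\<le>n. c a b x * r ^ a * s ^ b) = F r s x"
  define c' where "c' = (\<lambda>a b. if a = 0 then (\<lambda>x. 0) else c (a - 1) b)"
  have "\<forall>a b. polyfun (c' a b)" using c by (simp add: c'_def pf_const)
  moreover have "(\<Sum>a\<le>Suc m. \<Sum>b\<le>n. c' a b x * r ^ a * s ^ b) = r * F r s x" for r s x
    unfolding F[rule_format, symmetric] sum.atMost_Suc_shift
    by (simp add: c'_def sum_distrib_left mult_ac)
  ultimately show "\<exists>c. (\<forall>a b. polyfun (c a b)) \<and>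
      (\<forall>r s x. (\<Sum>a\<le>Suc m. \<Sum>b\<le>n. c a b x * r ^ a * s ^ b) = r * F r s x)" by blast
qed

lemma bp_s: "bipoly m n F \<Longrightarrow> bipoly m (Suc n) (\<lambda>r s x. s * F r s x)"
  unfolding bipoly_def
proof (elim exE conjE)
  fix c
  assume c: "\<forall>a b. polyfun (c a b)" and F: "\<forall>r s x. (\<Sum>a\<le>m. \<Sum>b\<le>n. c a b x * r ^ a * s ^ b) = F r s x"
  define c' where "c' = (\<lambda>a b. if b = 0 then (\<lambda>x. 0) else c a (b - 1))"
  have "\<forall>a b. polyfun (c' a b)" using c by (simp add: c'_def pf_const)
  moreover have "(\<Sum>a\<le>m. \<Sum>b\<le>Suc n. c' a b x * r ^ a * s ^ b) = s * F r s x" for r s x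
    unfolding F[rule_format, symmetric] sum.atMost_Suc_shift
    by (simp add: c'_def sum_distrib_left mult_ac)
  ultimately show "\<exists>c. (\<forall>a b. polyfun (c a b)) \<and>
      (\<forall>r s x. (\<Sum>a\<le>m. \<Sum>b\<le>Suc n. c a b x * r ^ a * s ^ b) = s * F r s x)" by blast
qed

lemma bp_mono_m: "bipoly m n F \<Longrightarrow> bipoly (Suc m) n F"
  unfolding bipoly_def
proof (elim exE conjE)
  fix c
  assume c: "\<forall>a b. polyfun (c a b)" and F: "\<forall>r s x. (\<Sum>a\<le>m. \<Sum>b\<le>n. c a b x * r ^ a * s ^ b) = F r s x"
  define c' where "c' = (\<lambda>a b. if a \<le> m then c a b else (\<lambda>x. 0))"
  have "\<forall>a b. polyfun (c' a b)" using c by (simp add: c'_def pf_const)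
  moreover have "(\<Sum>a\<le>Suc m. \<Sum>b\<le>n. c' a b x * r ^ a * s ^ b) = F r s x" for r s x
    unfolding F[rule_format, symmetric] sum.atMost_Suc
    by (simp add: c'_def)
  ultimately show "\<exists>c. (\<forall>a b. polyfun (c a b)) \<and>
      (\<forall>r s x. (\<Sum>a\<le>Suc m. \<Sum>b\<le>n. c a b x * r ^ a * s ^ b) = F r s x)" by blast
qed

lemma bp_mono_n: "bipoly m n F \<Longrightarrow> bipoly m (Suc n) F"
  unfolding bipoly_def
proof (elim exE conjE)
  fix c
  assume c: "\<forall>a b. polyfun (c a b)" and F: "\<forall>r s x. (\<Sum>a\<le>m. \<Sum>b\<le>n. c a b x * r ^ a * s ^ b) = F r s x"
  define c' where "c' = (\<lambda>a b. if b \<le> n then c a b else (\<lambda>x. 0))"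
  have "\<forall>a b. polyfun (c' a b)" using c by (simp add: c'_def pf_const)
  moreover have "(\<Sum>a\<le>m. \<Sum>b\<le>Suc n. c' a b x * r ^ a * s ^ b) = F r s x" for r s x
    unfolding F[rule_format, symmetric] sum.atMost_Suc
    by (simp add: c'_def)
  ultimately show "\<exists>c. (\<forall>a b. polyfun (c a b)) \<and>
      (\<forall>r s x. (\<Sum>a\<le>m. \<Sum>b\<le>Suc n. c a b x * r ^ a * s ^ b) = F r s x)" by blast
qed

lemma bp_mono: "bipoly m n F \<Longrightarrow> m \<le> m' \<Longrightarrow> n \<le> n' \<Longrightarrow> bipoly m' n' F"
proof -
  assume F: "bipoly m n F" and "m \<le> m'" "n \<le> n'"
  have G: "bipoly m' n F" using \<open>m \<le> m'\<close>
  proof (induction m' rule: dec_induct)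
    case base then show ?case using F .
  next
    case (step k) then show ?case using bp_mono_m by blast
  qed
  show "bipoly m' n' F" using \<open>n \<le> n'\<close>
  proof (induction n' rule: dec_induct)
    case base then show ?case using G .
  next
    case (step k) then show ?case using bp_mono_n by blast
  qed
qed

lemma bp_sub: "bipoly m n F \<Longrightarrow> bipoly m n G \<Longrightarrow> bipoly m n (\<lambda>r s x. F r s x - G r s x)"
  using bp_add[of m n F "\<lambda>r s x. (-1) * G r s x"] bp_scal[OF pf_const[of "-1"], of m n G]
  by simp

lemma bp_sum: "finite S \<Longrightarrow> (\<And>i. i \<in> S \<Longrightarrow> bipoly m n (F i)) \<Longrightarrow> bipoly m n (\<lambda>r s x. \<Sum>i\<in>S. F i r s x)"
proof (induction S rule: finite_induct)
  case empty then show ?case by (simp add: bp_zero)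
next
  case (insert a S)
  then show ?case using bp_add[of m n "F a" "\<lambda>r s x. \<Sum>i\<in>S. F i r s x"] by simp
qed

lemma bp_prod_r: "finite S \<Longrightarrow> bipoly m n F \<Longrightarrow>
   bipoly (m + card S) n (\<lambda>r s x. (\<Prod>i\<in>S. r - g i) * F r s x)"
proof (induction S rule: finite_induct)
  case empty then show ?case by simp
next
  case (insert a S)
  let ?G = "\<lambda>r s x. (\<Prod>i\<in>S. r - g i) * F r s x"
  have G: "bipoly (m + card S) n ?G" using insert by simp
  have "bipoly (Suc (m + card S)) n (\<lambda>r s x. r * ?G r s x - (g a) * ?G r s x)"
    by (rule bp_sub[OF bp_r[OF G] bp_mono[OF bp_scal[OF pf_const G]]]) auto
  moreover have "(\<lambda>r s x. r * ?G r s x - (g a) * ?G r s x) = (\<lambda>r s x. (\<Prod>i\<in>insert a S. r - g i) * F r s x)"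
    using insert by (auto simp: algebra_simps)
  ultimately show ?case using insert by simp
qed

lemma bp_prod_s: "finite K \<Longrightarrow> (\<And>k. k \<in> K \<Longrightarrow> polyfun (u k)) \<Longrightarrow> bipoly m n F \<Longrightarrow>
   bipoly m (n + 2 * card K) (\<lambda>r s x. (\<Prod>k\<in>K. 1 - s^2 * u k x) * F r s x)"
proof (induction K rule: finite_induct)
  case empty then show ?case by simp
next
  case (insert a K)
  let ?G = "\<lambda>r s x. (\<Prod>k\<in>K. 1 - s^2 * u k x) * F r s x"
  have G: "bipoly m (n + 2 * card K) ?G" using insert by simp
  have "bipoly m (Suc (Suc (n + 2 * card K))) (\<lambda>r s x. ?G r s x - s * (s * (u a x * ?G r s x)))"
    by (rule bp_sub[OF bp_mono[OF G] bp_s[OF bp_s[OF bp_scal[OF _ G]]]]) (use insert in auto)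
  moreover have "(\<lambda>r s x. ?G r s x - s * (s * (u a x * ?G r s x))) = (\<lambda>r s x. (\<Prod>k\<in>insert a K. 1 - s^2 * u k x) * F r s x)"
    using insert by (auto simp: algebra_simps power2_eq_square)
  ultimately show ?case using insert by simp
qed


lemma coeffs_part:
  fixes d f :: nat and e fi :: "nat \<Rightarrow> nat"
    and t u :: "nat \<Rightarrow> nat \<Rightarrow> real^'n \<Rightarrow> real"
  assumes "d \<ge> 1"
    and fi: "\<And>i. i \<in> {1..d} \<Longrightarrow> fi i \<le> f"
    and pt: "\<And>i j. i \<in> {1..d} \<Longrightarrow> j \<in> {1..e i} \<Longrightarrow> polyfun (t i j)"
    and pu: "\<And>i k. i \<in> {1..d} \<Longrightarrow> k \<in> {1..fi i} \<Longrightarrow> polyfun (u i k)"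
  shows "bipoly (2*d-1) (2*f+1) (q_explicit d e fi t u)"
proof -
  define T where "T i r s x = (\<Prod>h\<in>{1..d} - {i}. r - real h) * ((\<Prod>k=1..fi i. 1 - s^2 * u i k x) * (\<Prod>j=1..e i. t i j x))" for i r s x
  define B where "B r s x = (\<Sum>i=1..d. T i r s x)" for r s x
  have T: "bipoly (d-1) (2*f) (T i)" if i: "i \<in> {1..d}" for i
  proof -
    have "polyfun (\<lambda>x. \<Prod>j=1..e i. t i j x)" by (rule pf_prod) (use pt i in auto)
    from bp_const[OF this]
    have "bipoly 0 (0 + 2 * card {1..fi i}) (\<lambda>r s x. (\<Prod>k=1..fi i. 1 - s^2 * u i k x) * (\<Prod>j=1..e i. t i j x))"
      by (rule bp_prod_s[rotated 2]) (use pu i in auto)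
    from bp_prod_r[OF _ this, of "{1..d} - {i}" real]
    have "bipoly (0 + card ({1..d} - {i})) (0 + 2 * card {1..fi i}) (T i)"
      unfolding T_def by simp
    moreover have "card ({1..d} - {i}) = d - 1" using i by simp
    ultimately show ?thesis by (rule_tac bp_mono) (use fi[OF i] in auto)
  qed
  have B: "bipoly (d-1) (2*f) B" unfolding B_def by (rule bp_sum) (use T in auto)
  have PB: "bipoly (d - 1 + card {1..d}) (2*f) (\<lambda>r s x. (\<Prod>i=1..d. r - real i) * B r s x)"
    by (rule bp_prod_r[OF _ B]) simp
  have "bipoly (2*d-1) (2*f+1) (\<lambda>r s x. B r s x - s * ((\<Prod>i=1..d. r - real i) * B r s x))"
    by (rule bp_sub[OF bp_mono[OF B] bp_mono[OF bp_s[OF PB]]]) (use \<open>d \<ge> 1\<close> in auto)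
  moreover have "(\<lambda>r s x. B r s x - s * ((\<Prod>i=1..d. r - real i) * B r s x)) = q_explicit d e fi t u"
    unfolding q_explicit_def B_def T_def by (auto simp: algebra_simps intro!: ext)
  ultimately show ?thesis by simp
qed


lemma sum_single:
  assumes i0: "i0 \<in> {1..d::nat}"
  shows "(\<Sum>i=1..d. (\<Prod>h\<in>{1..d} - {i}. real i0 - real h) * G i) = (\<Prod>h\<in>{1..d} - {i0}. real i0 - real h) * G i0"
proof -
  have "(\<Sum>i=1..d. (\<Prod>h\<in>{1..d} - {i}. real i0 - real h) * G i) =
        (\<Prod>h\<in>{1..d} - {i0}. real i0 - real h) * G i0 + (\<Sum>i\<in>{1..d} - {i0}. (\<Prod>h\<in>{1..d} - {i}. real i0 - real h) * G i)"
    by (rule sum.remove) (use i0 in auto)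
  moreover have "(\<Sum>i\<in>{1..d} - {i0}. (\<Prod>h\<in>{1..d} - {i}. real i0 - real h) * G i) = 0"
  proof (rule sum.neutral, intro ballI)
    fix i assume "i \<in> {1..d} - {i0}"
    then have "(\<Prod>h\<in>{1..d} - {i}. real i0 - real h) = 0"
      using i0 by (subst prod_zero_iff) auto
    then show "(\<Prod>h\<in>{1..d} - {i}. real i0 - real h) * G i = 0" by simp
  qed
  ultimately show ?thesis by simp
qed

lemma prod_nz: "(\<Prod>h\<in>{1..d} - {i0::nat}. real i0 - real h) \<noteq> 0"
  by (subst prod_zero_iff) auto

lemma equiv_part:
  "cnf_phi d e fi t u x \<longleftrightarrow> (\<forall>r::real. \<exists>s::real. q_explicit d e fi t u r s x = 0)"
proof
  assume phi: "cnf_phi d e fi t u x"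
  show "\<forall>r::real. \<exists>s::real. q_explicit d e fi t u r s x = 0"
  proof
    fix r :: real
    show "\<exists>s. q_explicit d e fi t u r s x = 0"
    proof (cases "\<exists>i0\<in>{1..d}. r = real i0")
      case True
      then obtain i0 where i0: "i0 \<in> {1..d}" and r: "r = real i0" by blast
      have q: "q_explicit d e fi t u r s x = (1 - s * (\<Prod>i=1..d. r - real i)) *
          ((\<Prod>h\<in>{1..d} - {i0}. real i0 - real h) * ((\<Prod>j=1..e i0. t i0 j x)
                 * (\<Prod>k=1..fi i0. 1 - s^2 * u i0 k x)))" for s
        unfolding q_explicit_def r using sum_single[OF i0, of "\<lambda>i. (\<Prod>j=1..e i. t i j x)
                 * (\<Prod>k=1..fi i. 1 - s^2 * u i k x)"] by (simp add: mult.assoc)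
      from phi i0 have "(\<exists>j\<in>{1..e i0}. t i0 j x = 0) \<or> (\<exists>k\<in>{1..fi i0}. u i0 k x > 0)"
        unfolding cnf_phi_def by blast
      then show ?thesis
      proof
        assume "\<exists>j\<in>{1..e i0}. t i0 j x = 0"
        then have "(\<Prod>j=1..e i0. t i0 j x) = 0" by (subst prod_zero_iff) auto
        then show ?thesis using q by auto
      next
        assume "\<exists>k\<in>{1..fi i0}. u i0 k x > 0"
        then obtain k where k: "k \<in> {1..fi i0}" "u i0 k x > 0" by blast
        define s where "s = 1 / sqrt (u i0 k x)"
        have "s^2 = 1 / u i0 k x" unfolding s_def using k(2) by (simp add: power_divide)
        then have "1 - s^2 * u i0 k x = 0" using k(2) by simp
        then have "(\<Prod>k=1..fi i0. 1 - s^2 * u i0 k x) = 0" using k(1) by (subst prod_zero_iff) auto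
        then show ?thesis using q by auto
      qed
    next
      case False
      then have P: "(\<Prod>i=1..d. r - real i) \<noteq> 0" by (subst prod_zero_iff) auto
      show ?thesis
        by (rule exI[of _ "1 / (\<Prod>i=1..d. r - real i)"]) (use P in \<open>simp add: q_explicit_def\<close>)
    qed
  qed
next
  assume R: "\<forall>r::real. \<exists>s::real. q_explicit d e fi t u r s x = 0"
  show "cnf_phi d e fi t u x"
  proof (rule ccontr)
    assume "\<not> cnf_phi d e fi t u x"
    then obtain i0 where i0: "i0 \<in> {1..d}" and tnz: "\<forall>j\<in>{1..e i0}. t i0 j x \<noteq> 0"
      and ule: "\<forall>k\<in>{1..fi i0}. u i0 k x \<le> 0"
      unfolding cnf_phi_def by (auto simp: not_less)
    obtain s where s: "q_explicit d e fi t u (real i0) s x = 0" using R by blast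
    have P0: "(\<Prod>i=1..d. real i0 - real i) = 0" using i0 by (subst prod_zero_iff) auto
    have q: "q_explicit d e fi t u (real i0) s x =
          (\<Prod>h\<in>{1..d} - {i0}. real i0 - real h) * ((\<Prod>j=1..e i0. t i0 j x)
                 * (\<Prod>k=1..fi i0. 1 - s^2 * u i0 k x))"
      unfolding q_explicit_def P0 using sum_single[OF i0, of "\<lambda>i. (\<Prod>j=1..e i. t i j x)
                 * (\<Prod>k=1..fi i. 1 - s^2 * u i k x)"] by (simp add: mult.assoc)
    have "(\<Prod>j=1..e i0. t i0 j x) \<noteq> 0" using tnz by (subst prod_zero_iff) auto
    moreover have "(\<Prod>k=1..fi i0. 1 - s^2 * u i0 k x) \<noteq> 0"
    proof -
      have "\<forall>k\<in>{1..fi i0}. 1 - s^2 * u i0 k x \<noteq> 0"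
      proof
        fix k assume "k \<in> {1..fi i0}"
        then have "u i0 k x \<le> 0" using ule by blast
        then have "s^2 * u i0 k x \<le> 0" by (simp add: mult_nonneg_nonpos)
        then show "1 - s^2 * u i0 k x \<noteq> 0" by linarith
      qed
      then show ?thesis by (subst prod_zero_iff) auto
    qed
    ultimately show False using s q prod_nz[of d i0] by simp
  qed
qed

theorem theorem8p2:
  fixes d f :: nat and e fi :: "nat \<Rightarrow> nat"
    and t u :: "nat \<Rightarrow> nat \<Rightarrow> real^'n \<Rightarrow> real"
  assumes "d \<ge> 1"
    and "\<And>i. i \<in> {1..d} \<Longrightarrow> fi i \<le> f"
    and "\<And>i j. i \<in> {1..d} \<Longrightarrow> j \<in> {1..e i} \<Longrightarrow> polyfun (t i j)"
    and "\<And>i k. i \<in> {1..d} \<Longrightarrow> k \<in> {1..fi i} \<Longrightarrow> polyfun (u i k)"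
  shows "\<exists>c :: nat \<Rightarrow> nat \<Rightarrow> real^'n \<Rightarrow> real.
           (\<forall>a b. polyfun (c a b)) \<and>
           (\<forall>r s x. (\<Sum>a\<le>2*d-1. \<Sum>b\<le>2*f+1. c a b x * r ^ a * s ^ b)
                      = q_explicit d e fi t u r s x) \<and>
           (\<forall>x. cnf_phi d e fi t u x \<longleftrightarrow>
                (\<forall>r::real. \<exists>s::real. q_explicit d e fi t u r s x = 0))"
proof -
  have "bipoly (2*d-1) (2*f+1) (q_explicit d e fi t u)"
    using assms by (rule coeffs_part)
  then show ?thesis using equiv_part unfolding bipoly_def by blast
qed

end
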